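(* Let $m\ge r\ge 1$ be integers. Then $\chi(\operatorname{KG}(C(r,m)))=\chi(\operatorname{KG}(C^-(r,m)))=m-r+2$.
   Context: The matroid Kneser graph $\operatorname{KG}(M)$ has the bases of $M$ as vertices, two bases being adjacent when they are disjoint; $\chi$ is chromatic number. The Catalan matroid $C(r,m)$ is the matroid on $[m+r]$ whose bases are the $r$-subsets $\{b_1<\dots<b_r\}$ with $b_i\ge 2i-1$ for all $i$ (positions of North steps of lattice paths from $(0,0)$ to $(m,r)$ with unit East/North steps never going above the path $(NE)^rE^{m-r}$). The matroid $C^-(r,m)$ on $[m+r]$ has as bases the $r$-subsets $\{b_1<\dots<b_r\}$ with $2i-1\le b_i\le m-r+2i$ for all $i$ (paths between $(NE)^rE^{m-r}$ and $E^{m-r}(EN)^r$). Both are lattice path matroids. *)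

theory Defs
  imports Main
begin

definition chromatic_number :: "'a set \<Rightarrow> ('a \<Rightarrow> 'a \<Rightarrow> bool) \<Rightarrow> nat" where
  "chromatic_number V adj =
     (LEAST k. \<exists>f :: 'a \<Rightarrow> nat. (\<forall>v\<in>V. f v < k) \<and>
                 (\<forall>u\<in>V. \<forall>v\<in>V. adj u v \<longrightarrow> f u \<noteq> f v))"

definition kneser_adj :: "'a set \<Rightarrow> 'a set \<Rightarrow> bool" where
  "kneser_adj A B \<longleftrightarrow> A \<noteq> B \<and> A \<inter> B = {}"

definition chi_KG :: "'a set set \<Rightarrow> nat" where
  "chi_KG \<B> = chromatic_number \<B> kneser_adj"

text \<open>Bases of the Catalan matroid C(r,m) on ground set {1..m+r}: r-subsets
  b_1 < ... < b_r with b_i \<ge> 2i-1 (here with 0-based index i, b_(i+1) \<ge> 2(i+1)-1).\<close>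
definition catalan_bases :: "nat \<Rightarrow> nat \<Rightarrow> nat set set" where
  "catalan_bases r m = {B. B \<subseteq> {1..m+r} \<and> card B = r \<and>
      (\<forall>i<r. 2*(i+1) - 1 \<le> sorted_list_of_set B ! i)}"

definition catalan_minus_bases :: "nat \<Rightarrow> nat \<Rightarrow> nat set set" where
  "catalan_minus_bases r m = {B. B \<subseteq> {1..m+r} \<and> card B = r \<and>
      (\<forall>i<r. 2*(i+1) - 1 \<le> sorted_list_of_set B ! i \<and>
             sorted_list_of_set B ! i \<le> m + 2*(i+1) - r)}"

end

theory Submission
  imports Defs
begin


definition SV :: "nat \<Rightarrow> int set set" where
  "SV n = {X. X \<subseteq> {-int n..int n} - {0} \<and> (\<forall>i\<in>X. -i \<notin> X)}"

lemma SV_fin: "X \<in> SV n \<Longrightarrow> finite X"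
  unfolding SV_def by (auto intro: finite_subset)

lemma SV_finite: "finite (SV n)"
proof -
  have "SV n \<subseteq> Pow {-int n..int n}" unfolding SV_def by auto
  then show ?thesis by (rule finite_subset) auto
qed

lemma SV_sub: "X \<in> SV n \<Longrightarrow> Y \<subseteq> X \<Longrightarrow> Y \<in> SV n"
  unfolding SV_def by blast

lemma SV_empty[simp]: "{} \<in> SV n"
  unfolding SV_def by auto

lemma SV_neg: assumes "X \<in> SV n" shows "uminus ` X \<in> SV n"
proof -
  have a: "X \<subseteq> {-int n..int n} - {0}" and b: "\<forall>i\<in>X. -i \<notin> X" using assms unfolding SV_def by auto
  have "uminus ` X \<subseteq> {-int n..int n} - {0}"
  proof
    fix y assume "y \<in> uminus ` X"
    then obtain x where "x \<in> X" "y = -x" by auto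
    then show "y \<in> {-int n..int n} - {0}" using a by auto
  qed
  moreover have "\<forall>i\<in>uminus ` X. -i \<notin> uminus ` X"
  proof
    fix y assume "y \<in> uminus ` X"
    then obtain x where x: "x \<in> X" "y = -x" by auto
    show "-y \<notin> uminus ` X"
    proof
      assume "-y \<in> uminus ` X"
      then obtain z where "z \<in> X" "-y = -z" by auto
      then have "z = -x" using x by simp
      then show False using x b \<open>z \<in> X\<close> by auto
    qed
  qed
  ultimately show ?thesis unfolding SV_def by auto
qed

lemma neg_neg_set[simp]: "uminus ` uminus ` (X::int set) = X"
  by (auto simp: image_iff)

lemma inj_neg_set: "inj (image (uminus::int\<Rightarrow>int))"
  by (metis injI neg_neg_set)

definition ichain :: "nat \<Rightarrow> int set set \<Rightarrow> bool" where
  "ichain n C \<longleftrightarrow> C \<subseteq> SV n \<and> C \<noteq> {} \<and> (\<forall>X\<in>C. \<forall>Y\<in>C. X \<subseteq> Y \<or> Y \<subseteq> X)"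

lemma ichain_finite: "ichain n C \<Longrightarrow> finite C"
proof -
  assume "ichain n C"
  then have "C \<subseteq> SV n" unfolding ichain_def by simp
  then show "finite C" using SV_finite by (rule finite_subset)
qed

lemma ichain_card_inj: "ichain n C \<Longrightarrow> X\<in>C \<Longrightarrow> Y\<in>C \<Longrightarrow> card X = card Y \<Longrightarrow> X = Y"
  unfolding ichain_def by (metis SV_fin card_subset_eq subsetD)

lemma ichain_card_le: "ichain n C \<Longrightarrow> X\<in>C \<Longrightarrow> Y\<in>C \<Longrightarrow> card X \<le> card Y \<Longrightarrow> X \<subseteq> Y"
proof -
  assume c: "ichain n C" and x: "X\<in>C" and y: "Y\<in>C" and le: "card X \<le> card Y"
  have "finite X" using c x unfolding ichain_def by (auto intro: SV_fin)
  then show ?thesis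
    using c x y le ichain_card_inj[OF c x y] unfolding ichain_def
    by (metis card_mono le_antisym)
qed

lemma ichain_top: assumes c: "ichain n C" shows "\<Union>C \<in> C" "X \<in> C \<Longrightarrow> X \<subseteq> \<Union>C"
proof -
  have fin: "finite C" using ichain_finite[OF c] .
  have ne: "C \<noteq> {}" using c unfolding ichain_def by auto
  define M where "M = Max (card ` C)"
  have "M \<in> card ` C" unfolding M_def using fin ne by (intro Max_in) auto
  then obtain Z where xC: "Z \<in> C" and XM: "card Z = M" by auto
  have mx: "\<forall>Y\<in>C. card Y \<le> card Z" unfolding XM M_def using fin by auto
  have "\<forall>Y\<in>C. Y \<subseteq> Z" using ichain_card_le[OF c] mx xC by blast
  then have "\<Union>C = Z" using xC by blast
  then show "\<Union>C \<in> C" using xC by simp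
  show "X \<in> C \<Longrightarrow> X \<subseteq> \<Union>C" by blast
qed

lemma ichain_top_SV: "ichain n C \<Longrightarrow> \<Union>C \<in> SV n"
  using ichain_top(1) unfolding ichain_def by blast

lemma ichain_card_bound: assumes c: "ichain n C" shows "card C \<le> Suc (card (\<Union>C))"
proof -
  have "inj_on card C" using ichain_card_inj[OF c] by (meson inj_onI)
  then have "card C = card (card ` C)" by (simp add: card_image)
  also have "card ` C \<subseteq> {0..card (\<Union>C)}"
  proof
    fix k assume "k \<in> card ` C"
    then obtain X where X: "X \<in> C" "k = card X" by auto
    have "finite (\<Union>C)" using ichain_top_SV[OF c] SV_fin by blast
    then have "card X \<le> card (\<Union>C)" using ichain_top(2)[OF c X(1)] card_mono by blast
    then show "k \<in> {0..card (\<Union>C)}" using X by simp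
  qed
  then have "card (card ` C) \<le> card {0..card (\<Union>C)}" by (intro card_mono) auto
  finally show ?thesis by simp
qed

lemma ichain_card_bound2: assumes c: "ichain n C" and e: "{} \<notin> C" shows "card C \<le> card (\<Union>C)"
proof -
  have "inj_on card C" using ichain_card_inj[OF c] by (meson inj_onI)
  then have "card C = card (card ` C)" by (simp add: card_image)
  also have "card ` C \<subseteq> {1..card (\<Union>C)}"
  proof
    fix k assume "k \<in> card ` C"
    then obtain X where X: "X \<in> C" "k = card X" by auto
    have fX: "finite X" using X c unfolding ichain_def by (auto intro: SV_fin)
    have "X \<noteq> {}" using e X by auto
    then have "1 \<le> k" using fX X by (simp add: Suc_le_eq card_gt_0_iff)
    moreover have "k \<le> card (\<Union>C)"
    proof -
      have "finite (\<Union>C)" using ichain_top_SV[OF c] SV_fin by blast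
      then show ?thesis using ichain_top(2)[OF c X(1)] card_mono X(2) by blast
    qed
    ultimately show "k \<in> {1..card (\<Union>C)}" by simp
  qed
  then have "card (card ` C) \<le> card {1..card (\<Union>C)}" by (intro card_mono) auto
  finally show ?thesis by simp
qed

lemma ichain_sub: "ichain n C \<Longrightarrow> D \<subseteq> C \<Longrightarrow> D \<noteq> {} \<Longrightarrow> ichain n D"
  unfolding ichain_def by (meson subset_trans subsetD)

lemma ichain_neg: "ichain n C \<Longrightarrow> ichain n (image uminus ` C)"
proof -
  assume c: "ichain n C"
  have "image uminus ` C \<subseteq> SV n" using c SV_neg unfolding ichain_def by blast
  moreover have "image uminus ` C \<noteq> {}" using c unfolding ichain_def by auto
  moreover have "\<forall>X\<in>image uminus ` C. \<forall>Y\<in>image uminus ` C. X \<subseteq> Y \<or> Y \<subseteq> X"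
  proof (intro ballI)
    fix X Y assume "X \<in> image uminus ` C" "Y \<in> image uminus ` C"
    then obtain X' Y' where "X' \<in> C" "Y' \<in> C" "X = uminus ` X'" "Y = uminus ` Y'" by auto
    then show "X \<subseteq> Y \<or> Y \<subseteq> X" using c unfolding ichain_def by (metis image_mono)
  qed
  ultimately show ?thesis unfolding ichain_def by blast
qed



lemma card_two_shared:
  assumes fin: "finite A" and c: "card (f ` A) + 1 = card A"
  shows "card {v\<in>A. f v \<in> f ` (A - {v})} = 2"
proof -
  have "\<not> inj_on f A" using c card_image by fastforce
  then obtain a b where ab: "a \<in> A" "b \<in> A" "a \<noteq> b" "f a = f b"
    unfolding inj_on_def by blast
  have "{v\<in>A. f v \<in> f ` (A - {v})} = {a, b}"
  proof (rule set_eqI, rule iffI)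
    fix x assume x: "x \<in> {v\<in>A. f v \<in> f ` (A - {v})}"
    show "x \<in> {a, b}"
    proof (rule ccontr)
      assume nx: "x \<notin> {a, b}"
      from x have "f x \<in> f ` (A - {x})" by simp
      then obtain d where d0: "d \<in> A - {x}" "f x = f d" by (auto simp del: Diff_iff)
      then have d: "d \<in> A" "d \<noteq> x" "f d = f x" by auto
      have xA: "x \<in> A" using x by auto
      have sub: "f ` A \<subseteq> f ` (A - {a, x})"
      proof
        fix y assume "y \<in> f ` A"
        then obtain z where z: "z \<in> A" "y = f z" by auto
        show "y \<in> f ` (A - {a, x})"
        proof (cases "z = a")
          case True
          then show ?thesis using ab nx z by auto
        next
          case False
          show ?thesis
          proof (cases "z = x")
            case True
            show ?thesis
            proof (cases "f x = f a")
              case True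
              then show ?thesis using ab nx z \<open>z = x\<close> by (auto intro!: image_eqI[of _ _ b])
            next
              case False
              then have "d \<noteq> a" using d by auto
              then show ?thesis using d z \<open>z = x\<close> by (auto intro!: image_eqI[of _ _ d])
            qed
          next
            case False
            then show ?thesis using z \<open>z \<noteq> a\<close> by auto
          qed
        qed
      qed
      have "card (f ` A) \<le> card (f ` (A - {a, x}))" using sub fin by (intro card_mono) auto
      also have "\<dots> \<le> card (A - {a, x})" using fin by (intro card_image_le) auto
      also have "\<dots> = card A - 2"
      proof -
        have "card {a, x} = 2" using nx by auto
        then show ?thesis using fin ab xA by (simp add: card_Diff_subset)
      qed
      finally have "card (f ` A) \<le> card A - 2" .
      moreover have "card {a, x} \<le> card A" using fin ab xA by (intro card_mono) auto
      moreover have "card {a, x} = 2" using nx by auto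
      ultimately show False using c by linarith
    qed
  next
    fix x assume "x \<in> {a, b}"
    then show "x \<in> {v\<in>A. f v \<in> f ` (A - {v})}" using ab
      by (auto intro: image_eqI[of _ _ a] image_eqI[of _ _ b])
  qed
  then show ?thesis using ab by simp
qed

lemma even_card_involution:
  assumes "finite R" "\<forall>x\<in>R. g x \<in> R \<and> g (g x) = x \<and> g x \<noteq> x"
  shows "even (card R)"
  using assms
proof (induction "card R" arbitrary: R rule: less_induct)
  case less
  show ?case
  proof (cases "R = {}")
    case True then show ?thesis by simp
  next
    case False
    then obtain x where x: "x \<in> R" by auto
    define R' where "R' = R - {x, g x}"
    have gx: "g x \<in> R" "g x \<noteq> x" using less.prems x by auto
    have cR': "card R' = card R - 2" unfolding R'_def using less.prems(1) x gx
      by (simp add: card_Diff_subset)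
    have "card R \<ge> 2" using less.prems(1) x gx
      by (metis card_2_iff card_mono empty_subsetI insert_subset)
    then have lt: "card R' < card R" using cR' by simp
    have "\<forall>y\<in>R'. g y \<in> R' \<and> g (g y) = y \<and> g y \<noteq> y"
    proof
      fix y assume y: "y \<in> R'"
      then have yR: "y \<in> R" "y \<noteq> x" "y \<noteq> g x" unfolding R'_def by auto
      have p: "g y \<in> R" "g (g y) = y" "g y \<noteq> y" using less.prems(2) yR(1) by auto
      have "g y \<noteq> x"
      proof
        assume "g y = x" then have "g x = y" using p by simp
        then show False using yR by simp
      qed
      moreover have "g y \<noteq> g x"
      proof
        assume "g y = g x" then have "g (g y) = g (g x)" by simp
        then have "y = x" using p less.prems(2) x by simp
        then show False using yR by simp
      qed
      ultimately show "g y \<in> R' \<and> g (g y) = y \<and> g y \<noteq> y" unfolding R'_def using p by auto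
    qed
    then have "even (card R')" using less.hyps[OF lt] less.prems(1) unfolding R'_def by auto
    moreover have "card R = card R' + 2" using cR' \<open>card R \<ge> 2\<close> by simp
    ultimately show ?thesis by simp
  qed
qed



locale tuck =
  fixes n :: nat and L :: "int set \<Rightarrow> int"
  assumes n1: "1 \<le> n"
  and L0: "L {} = int n"
  and Lnz: "\<And>X. X \<in> SV n \<Longrightarrow> X \<noteq> {} \<Longrightarrow> L X \<noteq> 0 \<and> \<bar>L X\<bar> < int n"
  and Lneg: "\<And>X. X \<in> SV n \<Longrightarrow> X \<noteq> {} \<Longrightarrow> L (uminus ` X) = - L X"
  and Lcomp: "\<And>X Y. X \<in> SV n \<Longrightarrow> Y \<in> SV n \<Longrightarrow> X \<noteq> {} \<Longrightarrow> X \<subseteq> Y \<Longrightarrow> L X \<noteq> - L Y"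
begin

lemma nocomp: "X \<in> SV n \<Longrightarrow> Y \<in> SV n \<Longrightarrow> X \<subseteq> Y \<Longrightarrow> L X \<noteq> - L Y"
proof -
  assume a: "X \<in> SV n" "Y \<in> SV n" "X \<subseteq> Y"
  show ?thesis
  proof (cases "X = {}")
    case True
    show ?thesis
    proof (cases "Y = {}")
      case True then show ?thesis using \<open>X = {}\<close> L0 n1 by simp
    next
      case False then show ?thesis using \<open>X = {}\<close> L0 Lnz[OF a(2)] by auto
    qed
  next
    case False then show ?thesis using Lcomp a by auto
  qed
qed

lemma nocomp_chain: "ichain n C \<Longrightarrow> X \<in> C \<Longrightarrow> Y \<in> C \<Longrightarrow> L X \<noteq> - L Y"
  unfolding ichain_def using nocomp by (metis equation_minus_iff subsetD)

lemma L_range: "X \<in> SV n \<Longrightarrow> L X \<noteq> 0 \<and> \<bar>L X\<bar> \<le> int n"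
  using Lnz L0 n1 by (cases "X = {}") force+

definition happy :: "int set set \<Rightarrow> bool" where
  "happy C \<longleftrightarrow> ichain n C \<and> \<Union>C \<subseteq> L ` C"

definition AA :: "int set set \<Rightarrow> int set set \<Rightarrow> bool" where
  "AA s t \<longleftrightarrow> s \<subseteq> t \<and> card t = Suc (card s) \<and> \<Union>t \<subseteq> L ` s"

definition Up :: "int set set \<Rightarrow> int set set set" where
  "Up s = {t. ichain n t \<and> AA s t}"

definition Down :: "int set set \<Rightarrow> int set set set" where
  "Down s = {t. ichain n t \<and> AA t s}"

definition Anti :: "int set set \<Rightarrow> int set set set" where
  "Anti s = (if {} \<notin> s \<and> card s = card (\<Union>s) then {image uminus ` s} else {})"

definition nb :: "int set set \<Rightarrow> int set set set" where
  "nb s = Up s \<union> Down s \<union> Anti s"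

lemma happy_card: assumes "happy s"
  shows "card (\<Union>s) \<le> card (L ` s)" "card (L ` s) \<le> card s" "card s \<le> Suc (card (\<Union>s))"
proof -
  have c: "ichain n s" using assms unfolding happy_def by auto
  have f: "finite s" using ichain_finite[OF c] .
  show "card (\<Union>s) \<le> card (L ` s)" using assms f unfolding happy_def by (intro card_mono) auto
  show "card (L ` s) \<le> card s" using f by (rule card_image_le)
  show "card s \<le> Suc (card (\<Union>s))" by (rule ichain_card_bound[OF c])
qed

lemma chains_finite: "finite {t. ichain n t}"
proof -
  have "{t. ichain n t} \<subseteq> Pow (SV n)" unfolding ichain_def by auto
  then show ?thesis using SV_finite by (meson finite_Pow_iff finite_subset)
qed

lemma Up_char: assumes c: "ichain n s"
  shows "Up s = (\<lambda>w. insert w s) ` {w. w \<notin> s \<and> ichain n (insert w s) \<and> w \<union> \<Union>s \<subseteq> L ` s}"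
proof (rule set_eqI, rule iffI)
  fix t assume "t \<in> Up s"
  then have t: "ichain n t" "s \<subseteq> t" "card t = Suc (card s)" "\<Union>t \<subseteq> L ` s"
    unfolding Up_def AA_def by auto
  have ft: "finite t" using ichain_finite[OF t(1)] .
  have "t - s \<noteq> {}" using t(2) t(3) by (metis Diff_eq_empty_iff n_not_Suc_n subset_antisym)
  then obtain w where w: "w \<in> t" "w \<notin> s" by auto
  have "card (insert w s) = Suc (card s)" using w ichain_finite[OF c] by simp
  moreover have iws: "insert w s \<subseteq> t" using w(1) t(2) by blast
  ultimately have eq: "insert w s = t" using card_subset_eq[OF ft iws] t(3) by simp
  have i1: "ichain n (insert w s)" using eq t(1) by simp
  have "\<Union>t = w \<union> \<Union>s" using eq by blast
  then have i2: "w \<union> \<Union>s \<subseteq> L ` s" using t(4) by simp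
  have "w \<in> {w. w \<notin> s \<and> ichain n (insert w s) \<and> w \<union> \<Union>s \<subseteq> L ` s}" using w(2) i1 i2 by blast
  then show "t \<in> (\<lambda>w. insert w s) ` {w. w \<notin> s \<and> ichain n (insert w s) \<and> w \<union> \<Union>s \<subseteq> L ` s}"
    by (rule image_eqI[where f="\<lambda>w. insert w s" and x=w, OF eq[symmetric]])
next
  fix t assume "t \<in> (\<lambda>w. insert w s) ` {w. w \<notin> s \<and> ichain n (insert w s) \<and> w \<union> \<Union>s \<subseteq> L ` s}"
  then obtain w where w: "t = insert w s" "w \<notin> s" "ichain n (insert w s)" "w \<union> \<Union>s \<subseteq> L ` s" by auto
  then show "t \<in> Up s" unfolding Up_def AA_def using ichain_finite[OF c] by auto
qed

lemma card_Up: assumes c: "ichain n s"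
  shows "card (Up s) = card {w. w \<notin> s \<and> ichain n (insert w s) \<and> w \<union> \<Union>s \<subseteq> L ` s}"
  unfolding Up_char[OF c] by (rule card_image) (auto simp: inj_on_def)

lemma Down_char: assumes c: "ichain n s"
  shows "Down s = (\<lambda>v. s - {v}) ` {v\<in>s. s - {v} \<noteq> {} \<and> \<Union>s \<subseteq> L ` (s - {v})}"
proof (rule set_eqI, rule iffI)
  fix t assume "t \<in> Down s"
  then have t: "ichain n t" "t \<subseteq> s" "card s = Suc (card t)" "\<Union>s \<subseteq> L ` t"
    unfolding Down_def AA_def by auto
  have fs: "finite s" using ichain_finite[OF c] .
  have "s - t \<noteq> {}" using t(2) t(3) by (metis Diff_eq_empty_iff n_not_Suc_n subset_antisym)
  then obtain v where v: "v \<in> s" "v \<notin> t" by auto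
  have "card (s - {v}) = card t" using v t(3) fs by simp
  moreover have tsv: "t \<subseteq> s - {v}" using v(2) t(2) by blast
  ultimately have "t = s - {v}" using card_subset_eq[OF _ tsv] fs by simp
  moreover have "t \<noteq> {}" using t(1) unfolding ichain_def by auto
  ultimately have eq: "t = s - {v}" "t \<noteq> {}" by auto
  have "v \<in> {v\<in>s. s - {v} \<noteq> {} \<and> \<Union>s \<subseteq> L ` (s - {v})}" using v(1) eq t(4) by simp
  then show "t \<in> (\<lambda>v. s - {v}) ` {v\<in>s. s - {v} \<noteq> {} \<and> \<Union>s \<subseteq> L ` (s - {v})}"
    by (rule image_eqI[where f="\<lambda>v. s - {v}" and x=v, OF eq(1)])
next
  fix t assume "t \<in> (\<lambda>v. s - {v}) ` {v\<in>s. s - {v} \<noteq> {} \<and> \<Union>s \<subseteq> L ` (s - {v})}"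
  then obtain v where v: "t = s - {v}" "v \<in> s" "s - {v} \<noteq> {}" "\<Union>s \<subseteq> L ` (s - {v})" by auto
  have "ichain n t" using ichain_sub[OF c, of t] v by auto
  moreover have "card s = Suc (card t)" using v ichain_finite[OF c]
    by (metis card_Suc_Diff1)
  ultimately show "t \<in> Down s" unfolding Down_def AA_def using v by auto
qed

lemma card_Down: assumes c: "ichain n s"
  shows "card (Down s) = card {v\<in>s. s - {v} \<noteq> {} \<and> \<Union>s \<subseteq> L ` (s - {v})}"
  unfolding Down_char[OF c] by (rule card_image) (auto simp: inj_on_def)

end


lemma ichain_insert: "ichain n s \<Longrightarrow> ichain n (insert w s) \<longleftrightarrow> w \<in> SV n \<and> (\<forall>x\<in>s. w \<subseteq> x \<or> x \<subseteq> w)"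
  unfolding ichain_def by auto

context tuck begin

lemma nb_card: assumes h: "happy s"
  shows "card (nb s) = card (Up s) + card (Down s) + card (Anti s)"
proof -
  have c: "ichain n s" using h unfolding happy_def by auto
  have fs: "finite s" using ichain_finite[OF c] .
  have fU: "finite (Up s)" "finite (Down s)" "finite (Anti s)"
    using chains_finite unfolding Up_def Down_def Anti_def
    by (auto intro: finite_subset[OF _ chains_finite])
  have cu: "\<And>t. t \<in> Up s \<Longrightarrow> card t = Suc (card s)" unfolding Up_def AA_def by auto
  have cd: "\<And>t. t \<in> Down s \<Longrightarrow> Suc (card t) = card s" unfolding Down_def AA_def by auto
  have ca: "\<And>t. t \<in> Anti s \<Longrightarrow> card t = card s" unfolding Anti_def
    using inj_neg_set by (auto simp: card_image inj_on_def split: if_splits)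
  have d1: "Up s \<inter> Down s = {}" using cu cd by force
  have d2: "(Up s \<union> Down s) \<inter> Anti s = {}" using cu cd ca by force
  show ?thesis unfolding nb_def
    using fU d1 d2 by (simp add: card_Un_disjoint)
qed

lemma happy_ne: "happy s \<Longrightarrow> s \<noteq> {}" unfolding happy_def ichain_def by auto

lemma case_full_dup:
  assumes h: "happy s" and k: "card s = Suc (card (\<Union>s))" and d: "card (L ` s) = card (\<Union>s)"
  shows "card (nb s) = 2"
proof -
  have c: "ichain n s" using h unfolding happy_def by auto
  have fs: "finite s" using ichain_finite[OF c] .
  have LU: "L ` s = \<Union>s"
    using h d fs unfolding happy_def by (metis card_subset_eq finite_imageI)
  have "s \<noteq> {}" using happy_ne[OF h] .
  then have "card (L ` s) \<ge> 1" using fs by (simp add: Suc_le_eq card_gt_0_iff)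
  then have k2: "card s \<ge> 2" using k d by simp
  have down: "{v\<in>s. s - {v} \<noteq> {} \<and> \<Union>s \<subseteq> L ` (s - {v})} = {v\<in>s. L v \<in> L ` (s - {v})}"
  proof (rule Collect_cong, rule iffI)
    fix v assume "v \<in> s \<and> s - {v} \<noteq> {} \<and> \<Union>s \<subseteq> L ` (s - {v})"
    then show "v \<in> s \<and> L v \<in> L ` (s - {v})" using LU by auto
  next
    fix v assume v: "v \<in> s \<and> L v \<in> L ` (s - {v})"
    have "s - {v} \<noteq> {}"
    proof
      assume "s - {v} = {}"
      then have "s \<subseteq> {v}" by auto
      then have "card s \<le> 1" using card_mono[of "{v}" s] by simp
      then show False using k2 by simp
    qed
    moreover have "\<Union>s \<subseteq> L ` (s - {v})"
    proof -
      have "L ` s = insert (L v) (L ` (s - {v}))" using v by auto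
      then show ?thesis using v LU by auto
    qed
    ultimately show "v \<in> s \<and> s - {v} \<noteq> {} \<and> \<Union>s \<subseteq> L ` (s - {v})" using v by auto
  qed
  have cD: "card (Down s) = 2"
    unfolding card_Down[OF c] down
    by (rule card_two_shared[OF fs]) (use k d in simp)
  have cU: "card (Up s) = 0"
  proof -
    have e: "{w. w \<notin> s \<and> ichain n (insert w s) \<and> w \<union> \<Union>s \<subseteq> L ` s} = {}"
    proof (rule ccontr)
      assume "{w. w \<notin> s \<and> ichain n (insert w s) \<and> w \<union> \<Union>s \<subseteq> L ` s} \<noteq> {}"
      then obtain w where w: "w \<notin> s" "ichain n (insert w s)" "w \<union> \<Union>s \<subseteq> L ` s" by auto
      have "card (insert w s) \<le> Suc (card (\<Union>(insert w s)))" by (rule ichain_card_bound[OF w(2)])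
      moreover have "card (insert w s) = Suc (card s)" using w fs by simp
      moreover have "card (\<Union>(insert w s)) \<le> card (L ` s)"
        using w(3) fs by (intro card_mono) auto
      ultimately show False using k d by simp
    qed
    show ?thesis unfolding card_Up[OF c] e by simp
  qed
  have cA: "card (Anti s) = 0" unfolding Anti_def using k by simp
  show ?thesis using nb_card[OF h] cD cU cA by simp
qed

end


context tuck begin

lemma case_full_inj:
  assumes h: "happy s" and k: "card s = Suc (card (\<Union>s))" and d: "card (L ` s) = card s"
  shows "card (nb s) = (if s = {{}} then 1 else 2)"
proof -
  have c: "ichain n s" using h unfolding happy_def by auto
  have fs: "finite s" using ichain_finite[OF c] .
  define U where "U = \<Union>s"
  have UL: "U \<subseteq> L ` s" using h unfolding happy_def U_def by auto
  have inj: "inj_on L s" using d fs by (simp add: eq_card_imp_inj_on)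
  have fU: "finite U" unfolding U_def using ichain_top_SV[OF c] SV_fin by blast
  have "card (L ` s - U) = 1" using d k UL fs fU unfolding U_def[symmetric]
    by (simp add: card_Diff_subset)
  then obtain l where l: "L ` s - U = {l}" by (auto simp: card_Suc_eq)
  have Ls: "L ` s = insert l U" and lU: "l \<notin> U" using l UL by auto
  obtain v0 where v0: "v0 \<in> s" "L v0 = l" using Ls by (metis imageE insertI1)
  have Us: "U \<in> s" unfolding U_def using ichain_top(1)[OF c] .
  have down: "{v\<in>s. s - {v} \<noteq> {} \<and> \<Union>s \<subseteq> L ` (s - {v})} = (if s = {{}} then {} else {v0})"
  proof -
    have key: "\<And>v. v \<in> s \<Longrightarrow> (U \<subseteq> L ` (s - {v})) \<longleftrightarrow> v = v0"
    proof -
      fix v assume v: "v \<in> s"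
      have e: "L ` (s - {v}) = L ` s - {L v}" using inj v by (auto simp: inj_on_def)
      show "(U \<subseteq> L ` (s - {v})) \<longleftrightarrow> v = v0"
      proof
        assume "U \<subseteq> L ` (s - {v})"
        then have "L v \<notin> U" using e by auto
        then have "L v = l" using Ls v by auto
        then show "v = v0" using inj v v0 unfolding inj_on_def by auto
      next
        assume "v = v0" then show "U \<subseteq> L ` (s - {v})" using e Ls lU v0 by auto
      qed
    qed
    have ss: "s - {v0} = {} \<longleftrightarrow> s = {{}}"
    proof
      assume "s - {v0} = {}"
      then have "s = {v0}" using v0 by auto
      then have "U = v0" unfolding U_def by simp
      then have "card s = Suc (card v0)" using k unfolding U_def by (simp add: \<open>s = {v0}\<close>)
      then have "card v0 = 0" using \<open>s = {v0}\<close> by simp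
      moreover have "finite v0" using \<open>U = v0\<close> fU by simp
      ultimately show "s = {{}}" using \<open>s = {v0}\<close> by simp
    next
      assume "s = {{}}" then show "s - {v0} = {}" using v0 by auto
    qed
    show ?thesis using key ss v0 unfolding U_def[symmetric] by auto
  qed
  have cD: "card (Down s) = (if s = {{}} then 0 else 1)"
    unfolding card_Down[OF c] down by simp
  define w0 where "w0 = insert l U"
  have lnz: "l \<noteq> 0 \<and> \<bar>l\<bar> \<le> int n" using L_range v0 c unfolding ichain_def by auto
  have mlU: "-l \<notin> U"
  proof
    assume "-l \<in> U"
    then obtain y where y: "y \<in> s" "L y = -l" using UL by auto
    then show False using nocomp_chain[OF c v0(1) y(1)] v0 by simp
  qed
  have USV: "U \<in> SV n" unfolding U_def using ichain_top_SV[OF c] .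
  have w0SV: "w0 \<in> SV n"
    using USV lnz mlU unfolding w0_def SV_def by auto
  have up: "{w. w \<notin> s \<and> ichain n (insert w s) \<and> w \<union> \<Union>s \<subseteq> L ` s} = {w0}"
  proof (rule set_eqI, rule iffI)
    fix w assume "w \<in> {w. w \<notin> s \<and> ichain n (insert w s) \<and> w \<union> \<Union>s \<subseteq> L ` s}"
    then have w: "w \<notin> s" "ichain n (insert w s)" "w \<union> U \<subseteq> L ` s" unfolding U_def by auto
    have "card (insert w s) \<le> Suc (card (\<Union>(insert w s)))" by (rule ichain_card_bound[OF w(2)])
    then have "card s \<le> card (w \<union> U)" using w fs unfolding U_def by simp
    moreover have "card (w \<union> U) \<le> card (L ` s)" using w fs by (intro card_mono) auto
    ultimately have "w \<union> U = L ` s" using w(3) d fs by (metis card_subset_eq finite_imageI le_antisym)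
    then have wU: "w \<union> U = insert l U" using Ls by simp
    have "w \<subseteq> U \<or> U \<subseteq> w" using w(2) Us unfolding ichain_def by auto
    then have "U \<subseteq> w" using wU lU by auto
    then have "w = insert l U" using wU by auto
    then show "w \<in> {w0}" unfolding w0_def by simp
  next
    fix w assume "w \<in> {w0}"
    then have w: "w = w0" by simp
    have "w0 \<notin> s"
    proof
      assume "w0 \<in> s" then have "w0 \<subseteq> U" unfolding U_def by auto
      then show False unfolding w0_def using lU by auto
    qed
    moreover have "ichain n (insert w0 s)"
      using ichain_insert[OF c] w0SV unfolding w0_def U_def by auto
    moreover have "w0 \<union> \<Union>s \<subseteq> L ` s" unfolding w0_def U_def[symmetric] using Ls by auto
    ultimately show "w \<in> {w. w \<notin> s \<and> ichain n (insert w s) \<and> w \<union> \<Union>s \<subseteq> L ` s}" using w by auto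
  qed
  have cU: "card (Up s) = 1" unfolding card_Up[OF c] up by simp
  have cA: "card (Anti s) = 0" unfolding Anti_def using k by simp
  show ?thesis using nb_card[OF h] cD cU cA by simp
qed

end


context tuck begin

lemma case_tight:
  assumes h: "happy s" and k: "card s = card (\<Union>s)"
  shows "card (nb s) = 2"
proof -
  have c: "ichain n s" using h unfolding happy_def by auto
  have fs: "finite s" using ichain_finite[OF c] .
  define U where "U = \<Union>s"
  have UL: "U \<subseteq> L ` s" using h unfolding happy_def U_def by auto
  have fU: "finite U" unfolding U_def using ichain_top_SV[OF c] SV_fin by blast
  have USV: "U \<in> SV n" unfolding U_def using ichain_top_SV[OF c] .
  have Us: "U \<in> s" unfolding U_def using ichain_top(1)[OF c] .
  have subU: "\<And>x. x \<in> s \<Longrightarrow> x \<subseteq> U" unfolding U_def by auto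
  have LU: "L ` s = U"
  proof -
    have "card (L ` s) \<le> card U" using card_image_le[OF fs, of L] k unfolding U_def by simp
    then show ?thesis using UL fs by (metis card_seteq finite_imageI)
  qed
  have hpos: "card U \<ge> 1"
  proof -
    have "s \<noteq> {}" using happy_ne[OF h] .
    then have "card s \<ge> 1" using fs by (simp add: Suc_le_eq card_gt_0_iff)
    then show ?thesis using k unfolding U_def by simp
  qed
  have cD: "card (Down s) = 0"
  proof -
    have e: "{v\<in>s. s - {v} \<noteq> {} \<and> \<Union>s \<subseteq> L ` (s - {v})} = {}"
    proof (rule ccontr)
      assume "{v\<in>s. s - {v} \<noteq> {} \<and> \<Union>s \<subseteq> L ` (s - {v})} \<noteq> {}"
      then obtain v where v: "v \<in> s" "U \<subseteq> L ` (s - {v})" unfolding U_def by auto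
      have "card U \<le> card (L ` (s - {v}))" using v fs by (intro card_mono) auto
      also have "\<dots> \<le> card (s - {v})" using fs by (intro card_image_le) auto
      also have "\<dots> = card s - 1" using v fs by simp
      finally show False using k hpos unfolding U_def by simp
    qed
    show ?thesis unfolding card_Down[OF c] e by simp
  qed
  have Wsimp: "{w. w \<notin> s \<and> ichain n (insert w s) \<and> w \<union> \<Union>s \<subseteq> L ` s}
             = {w. w \<notin> s \<and> ichain n (insert w s) \<and> w \<subseteq> U}"
    unfolding U_def[symmetric] LU by auto
  have cinj: "inj_on card s" using ichain_card_inj[OF c] by (meson inj_onI)
  have notin_card: "\<And>w. w \<notin> s \<Longrightarrow> ichain n (insert w s) \<Longrightarrow> card w \<notin> card ` s"
  proof
    fix w assume w: "w \<notin> s" "ichain n (insert w s)" "card w \<in> card ` s"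
    then obtain x where x: "x \<in> s" "card x = card w" by auto
    have "w = x" using ichain_card_inj[OF w(2) insertI1 insertI2[OF x(1)]] x(2) by simp
    then show False using w(1) x(1) by blast
  qed
  show ?thesis
  proof (cases "{} \<in> s")
    case False
    have up: "{w. w \<notin> s \<and> ichain n (insert w s) \<and> w \<subseteq> U} = {{}}"
    proof (rule set_eqI, rule iffI)
      fix w assume w: "w \<in> {w. w \<notin> s \<and> ichain n (insert w s) \<and> w \<subseteq> U}"
      then have w1: "w \<notin> s" "ichain n (insert w s)" "w \<subseteq> U" by auto
      show "w \<in> {{}}"
      proof (rule ccontr)
        assume "w \<notin> {{}}"
        then have "w \<noteq> {}" by simp
        have fw: "finite w" using w1 fU finite_subset by blast
        have "card w \<le> card U" using card_mono[OF fU w1(3)] .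
        moreover have "card w \<ge> 1" using \<open>w \<noteq> {}\<close> fw by (simp add: Suc_le_eq card_gt_0_iff)
        ultimately have cw: "card w \<in> {1..card U}" by simp
        have "card ` s \<subseteq> {1..card U}"
        proof
          fix m assume "m \<in> card ` s"
          then obtain x where x: "x \<in> s" "m = card x" by auto
          have "x \<noteq> {}" using False x by auto
          moreover have "finite x" using x fU subU finite_subset by blast
          ultimately have "card x \<ge> 1" by (simp add: Suc_le_eq card_gt_0_iff)
          moreover have "card x \<le> card U" using card_mono[OF fU subU[OF x(1)]] .
          ultimately show "m \<in> {1..card U}" using x(2) by simp
        qed
        moreover have "card (card ` s) = card {1..card U}" using cinj k unfolding U_def
          by (simp add: card_image)
        ultimately have "card ` s = {1..card U}" by (intro card_subset_eq) auto
        then show False using notin_card[OF w1(1) w1(2)] cw by simp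
      qed
    next
      fix w :: "int set" assume "w \<in> {{}}"
      then have w: "w = {}" by simp
      have "ichain n (insert {} s)" using ichain_insert[OF c] by auto
      then show "w \<in> {w. w \<notin> s \<and> ichain n (insert w s) \<and> w \<subseteq> U}" using w False by auto
    qed
    have cU: "card (Up s) = 1" unfolding card_Up[OF c] Wsimp up by simp
    have cA: "card (Anti s) = 1" unfolding Anti_def using False k by simp
    show ?thesis using nb_card[OF h] cD cU cA by simp
  next
    case True
    have sub: "card ` s \<subseteq> {0..card U}"
    proof
      fix m assume "m \<in> card ` s"
      then obtain x where x: "x \<in> s" "m = card x" by auto
      show "m \<in> {0..card U}" using card_mono[OF fU subU[OF x(1)]] x(2) by simp
    qed
    have "card ({0..card U} - card ` s) = 1"
      using sub cinj k unfolding U_def[symmetric] by (simp add: card_Diff_subset card_image fs)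
    then obtain j where j: "{0..card U} - card ` s = {j}" by (auto simp: card_Suc_eq)
    have jn: "j \<notin> card ` s" "j \<le> card U" using j by auto
    have inS: "\<And>m. m \<le> card U \<Longrightarrow> m \<noteq> j \<Longrightarrow> m \<in> card ` s" using j by auto
    have j0: "j \<noteq> 0"
    proof
      assume "j = 0"
      then have "j = card ({}::int set)" by simp
      then have "j \<in> card ` s" using True by blast
      then show False using jn by simp
    qed
    have jh: "j \<noteq> card U" using jn Us by auto
    obtain a where a: "a \<in> s" "card a = j - 1"
    proof -
      have "j - 1 \<in> card ` s" using inS[of "j - 1"] jn j0 by simp
      then show ?thesis using that by auto
    qed
    obtain b where b: "b \<in> s" "card b = Suc j"
    proof -
      have "Suc j \<le> card U" using jn jh by simp
      then have "Suc j \<in> card ` s" using inS by simp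
      then show ?thesis using that by auto
    qed
    have ab: "a \<subseteq> b" using ichain_card_le[OF c a(1) b(1)] a b by simp
    have fb: "finite b" using b subU fU finite_subset by blast
    have "card (b - a) = 2" using ab fb a b j0 by (simp add: card_Diff_subset finite_subset)
    then obtain p q where pq: "b - a = {p, q}" "p \<noteq> q" by (auto simp: card_Suc_eq numeral_2_eq_2)
    have bSV: "b \<in> SV n" using b c unfolding ichain_def by auto
    have fa: "finite a" using ab fb finite_subset by blast
    have good: "\<And>z. z \<in> {p, q} \<Longrightarrow> insert z a \<in> {w. w \<notin> s \<and> ichain n (insert w s) \<and> w \<subseteq> U}"
    proof -
      fix z assume z: "z \<in> {p, q}"
      have za: "z \<notin> a" "z \<in> b" using z pq by auto
      have cz: "card (insert z a) = j" using za fa a j0 by simp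
      have zb: "insert z a \<subseteq> b" using za ab by auto
      have nots: "insert z a \<notin> s" using cz jn by auto
      have cmp: "\<forall>x\<in>s. insert z a \<subseteq> x \<or> x \<subseteq> insert z a"
      proof
        fix x assume x: "x \<in> s"
        have "card x \<noteq> j" using x jn by auto
        then have "card x < j \<or> card x > j" by auto
        then show "insert z a \<subseteq> x \<or> x \<subseteq> insert z a"
        proof
          assume "card x < j"
          then have "card x \<le> card a" using a by simp
          then have "x \<subseteq> a" using ichain_card_le[OF c x a(1)] by simp
          then show ?thesis by auto
        next
          assume "card x > j"
          then have "card b \<le> card x" using b by simp
          then have "b \<subseteq> x" using ichain_card_le[OF c b(1) x] by simp
          then show ?thesis using zb by auto
        qed
      qed
      have "insert z a \<in> SV n" using SV_sub[OF bSV zb] .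
      then have "ichain n (insert (insert z a) s)" using ichain_insert[OF c] cmp by auto
      moreover have "insert z a \<subseteq> U" using zb b subU by auto
      ultimately show "insert z a \<in> {w. w \<notin> s \<and> ichain n (insert w s) \<and> w \<subseteq> U}" using nots by auto
    qed
    have up: "{w. w \<notin> s \<and> ichain n (insert w s) \<and> w \<subseteq> U} = {insert p a, insert q a}"
    proof (rule set_eqI, rule iffI)
      fix w assume w: "w \<in> {w. w \<notin> s \<and> ichain n (insert w s) \<and> w \<subseteq> U}"
      then have w1: "w \<notin> s" "ichain n (insert w s)" "w \<subseteq> U" by auto
      have fw: "finite w" using w1 fU finite_subset by blast
      have "card w \<le> card U" using w1 fU by (intro card_mono)
      moreover have "card w \<notin> card ` s" using notin_card[OF w1(1) w1(2)] .
      ultimately have cw: "card w = j" using j by auto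
      have "a \<subseteq> w"
      proof -
        have "w \<subseteq> a \<or> a \<subseteq> w" using w1(2) a(1) unfolding ichain_def by auto
        moreover have "\<not> w \<subseteq> a" using cw a fa j0 by (metis card_mono diff_less le_less_trans less_irrefl less_one not_gr0)
        ultimately show ?thesis by auto
      qed
      have "w \<subseteq> b"
      proof -
        have "w \<subseteq> b \<or> b \<subseteq> w" using w1(2) b(1) unfolding ichain_def by auto
        moreover have "\<not> b \<subseteq> w" using cw b fw by (metis card_mono lessI not_less)
        ultimately show ?thesis by auto
      qed
      have "card (w - a) = 1" using \<open>a \<subseteq> w\<close> fw a cw j0 by (simp add: card_Diff_subset finite_subset)
      then obtain z where z: "w - a = {z}" by (auto simp: card_Suc_eq)
      have "z \<in> b - a" using z \<open>w \<subseteq> b\<close> by auto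
      then have "z \<in> {p, q}" using pq by simp
      moreover have "w = insert z a" using z \<open>a \<subseteq> w\<close> by auto
      ultimately show "w \<in> {insert p a, insert q a}" by auto
    next
      fix w assume "w \<in> {insert p a, insert q a}"
      then show "w \<in> {w. w \<notin> s \<and> ichain n (insert w s) \<and> w \<subseteq> U}" using good by auto
    qed
    have "insert p a \<noteq> insert q a" using pq by auto
    then have cU: "card (Up s) = 2" unfolding card_Up[OF c] Wsimp up by simp
    have cA: "card (Anti s) = 0" unfolding Anti_def using True by simp
    show ?thesis using nb_card[OF h] cD cU cA by simp
  qed
qed

end


context tuck begin

lemma nb_card_all: assumes h: "happy s" shows "card (nb s) = (if s = {{}} then 1 else 2)"
proof -
  have c: "ichain n s" using h unfolding happy_def by auto
  note hc = happy_card[OF h]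
  have e1: "card ({{}}::int set set) = 1" by simp
  show ?thesis
  proof (cases "card s = card (\<Union>s)")
    case True
    have "s \<noteq> {{}}" using True by auto
    then show ?thesis using case_tight[OF h True] by simp
  next
    case False
    then have k: "card s = Suc (card (\<Union>s))" using hc by linarith
    show ?thesis
    proof (cases "card (L ` s) = card (\<Union>s)")
      case True
      have "s \<noteq> {{}}" using True by auto
      then show ?thesis using case_full_dup[OF h k True] by simp
    next
      case False
      then have "card (L ` s) = card s" using hc k by linarith
      then show ?thesis using case_full_inj[OF h k] by simp
    qed
  qed
qed

lemma happy_neg: assumes h: "happy s" and e: "{} \<notin> s" shows "happy (image uminus ` s)"
proof -
  have c: "ichain n s" using h unfolding happy_def by auto
  have "\<Union>(image uminus ` s) = uminus ` (\<Union>s)" by auto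
  also have "\<dots> \<subseteq> uminus ` (L ` s)" using h unfolding happy_def by auto
  also have "\<dots> = L ` (image uminus ` s)"
  proof -
    have "\<And>x. x \<in> s \<Longrightarrow> L (uminus ` x) = - L x"
      using Lneg c e unfolding ichain_def by (metis subsetD)
    then show ?thesis by (auto simp: image_iff)
  qed
  finally show ?thesis using ichain_neg[OF c] unfolding happy_def by auto
qed

lemma nb_sym: assumes h: "happy s" and t: "t \<in> nb s"
  shows "happy t \<and> s \<in> nb t \<and> t \<noteq> s"
proof -
  have c: "ichain n s" using h unfolding happy_def by auto
  have fs: "finite s" using ichain_finite[OF c] .
  consider "t \<in> Up s" | "t \<in> Down s" | "t \<in> Anti s" using t unfolding nb_def by auto
  then show ?thesis
  proof cases
    case 1
    then have t1: "ichain n t" "AA s t" unfolding Up_def by auto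
    have "L ` s \<subseteq> L ` t" using t1 unfolding AA_def by auto
    moreover have "\<Union>t \<subseteq> L ` s" using t1 unfolding AA_def by simp
    ultimately have "\<Union>t \<subseteq> L ` t" by (rule subset_trans[rotated])
    then have "happy t" using t1(1) unfolding happy_def by simp
    moreover have "s \<in> Down t" using t1 c unfolding Down_def by auto
    moreover have "t \<noteq> s" using t1 unfolding AA_def by auto
    ultimately show ?thesis unfolding nb_def by auto
  next
    case 2
    then have t1: "ichain n t" "AA t s" unfolding Down_def by auto
    have "\<Union>t \<subseteq> \<Union>s" using t1 unfolding AA_def by auto
    moreover have "\<Union>s \<subseteq> L ` t" using t1 unfolding AA_def by simp
    ultimately have "\<Union>t \<subseteq> L ` t" by (rule subset_trans)
    then have "happy t" using t1(1) unfolding happy_def by simp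
    moreover have "s \<in> Up t" using t1 c unfolding Up_def by auto
    moreover have "t \<noteq> s" using t1 unfolding AA_def by auto
    ultimately show ?thesis unfolding nb_def by auto
  next
    case 3
    then have a: "{} \<notin> s" "card s = card (\<Union>s)" "t = image uminus ` s"
      unfolding Anti_def by (auto split: if_splits)
    have ht: "happy t" using happy_neg[OF h a(1)] a(3) by simp
    have "{} \<notin> t" using a by auto
    moreover have "card t = card s" using a(3) inj_neg_set by (simp add: card_image inj_on_def)
    moreover have "\<Union>t = uminus ` \<Union>s" using a(3) by auto
    moreover have "card (uminus ` \<Union>s) = card (\<Union>s)" by (simp add: card_image inj_on_def)
    moreover have "image uminus ` t = s" using a(3) by (simp add: image_image)
    ultimately have "s \<in> Anti t" unfolding Anti_def using a by simp
    moreover have "t \<noteq> s"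
    proof
      assume ts: "t = s"
      have Us: "\<Union>s \<in> s" using ichain_top(1)[OF c] .
      then have "uminus ` \<Union>s \<in> s" using ts a(3) by (metis image_eqI)
      then have sub: "uminus ` \<Union>s \<subseteq> \<Union>s" by auto
      have "\<Union>s \<noteq> {}" proof assume e0: "\<Union>s = {}" have "{} \<in> s" using Us unfolding e0 . then show False using a(1) by simp qed
      then obtain i where i: "i \<in> \<Union>s" by blast
      have "-i \<in> \<Union>s" using sub i by auto
      moreover have "\<Union>s \<in> SV n" using ichain_top_SV[OF c] .
      ultimately show False using i unfolding SV_def by auto
    qed
    ultimately show ?thesis using ht unfolding nb_def by auto
  qed
qed

lemma tuck_False: False
proof -
  define H where "H = {s. happy s}"
  have fH: "finite H" unfolding H_def happy_def
    by (rule finite_subset[OF _ chains_finite]) auto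
  have e: "{{}} \<in> H" unfolding H_def happy_def ichain_def by simp
  define R where "R = Sigma H nb"
  have fnb: "\<And>s. finite (nb s)"
    unfolding nb_def Up_def Down_def Anti_def
    by (auto intro: finite_subset[OF _ chains_finite])
  have cR: "card R = (\<Sum>s\<in>H. card (nb s))" unfolding R_def
    using fH fnb by (simp add: card_SigmaI)
  also have "\<dots> = (\<Sum>s\<in>H. if s = {{}} then 1 else 2)"
    by (rule sum.cong) (auto simp: H_def nb_card_all)
  also have "\<dots> = 1 + (\<Sum>s\<in>H - {{{}}}. if s = {{}} then 1 else 2)"
    using fH e by (simp add: sum.remove)
  also have "\<dots> = 1 + (\<Sum>s\<in>H - {{{}}}. (2::nat))"
    by (subst sum.cong[OF refl, of _ "\<lambda>_. 2"]) auto
  also have "\<dots> = 1 + 2 * card (H - {{{}}})" by simp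
  finally have cR2: "card R = 1 + 2 * card (H - {{{}}})" .
  then have odd: "odd (card R)" by simp
  have fR: "finite R" unfolding R_def using fH fnb by auto
  have "even (card R)"
  proof (rule even_card_involution[OF fR, of "\<lambda>(a, b). (b, a)"])
    show "\<forall>x\<in>R. (\<lambda>(a, b). (b, a)) x \<in> R \<and> (\<lambda>(a, b). (b, a)) ((\<lambda>(a, b). (b, a)) x) = x \<and> (\<lambda>(a, b). (b, a)) x \<noteq> x"
    proof
      fix x assume "x \<in> R"
      then obtain a b where x: "x = (a, b)" "a \<in> H" "b \<in> nb a" unfolding R_def by auto
      have "happy a" using x(2) unfolding H_def by simp
      then have hb: "happy b" "a \<in> nb b" "b \<noteq> a" using nb_sym x(3) by blast+
      have "(b, a) \<in> R" unfolding R_def H_def using hb by simp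
      then show "(\<lambda>(a, b). (b, a)) x \<in> R \<and> (\<lambda>(a, b). (b, a)) ((\<lambda>(a, b). (b, a)) x) = x \<and> (\<lambda>(a, b). (b, a)) x \<noteq> x"
        using x(1) hb(3) by simp
    qed
  qed
  then show False using odd by simp
qed

end

theorem tucker:
  fixes N M :: nat and lam :: "int set \<Rightarrow> int"
  assumes a1: "\<And>X. X \<in> SV N \<Longrightarrow> X \<noteq> {} \<Longrightarrow> lam X \<noteq> 0 \<and> \<bar>lam X\<bar> \<le> int M"
  and a2: "\<And>X. X \<in> SV N \<Longrightarrow> X \<noteq> {} \<Longrightarrow> lam (uminus ` X) = - lam X"
  and a3: "\<And>X Y. X \<in> SV N \<Longrightarrow> Y \<in> SV N \<Longrightarrow> X \<noteq> {} \<Longrightarrow> X \<subseteq> Y \<Longrightarrow> lam X \<noteq> - lam Y"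
  shows "N \<le> M"
proof (rule ccontr)
  assume "\<not> N \<le> M"
  then have MN: "M < N" by simp
  interpret tuck N "\<lambda>X. if X = {} then int N else lam X"
  proof
    show "1 \<le> N" using MN by simp
    show "(if {} = {} then int N else lam {}) = int N" by simp
    show "\<And>X. X \<in> SV N \<Longrightarrow> X \<noteq> {} \<Longrightarrow> (if X = {} then int N else lam X) \<noteq> 0 \<and>
      \<bar>if X = {} then int N else lam X\<bar> < int N"
    proof -
      fix X assume X: "X \<in> SV N" "X \<noteq> {}"
      have "lam X \<noteq> 0 \<and> \<bar>lam X\<bar> \<le> int M" using a1 X by blast
      then show "(if X = {} then int N else lam X) \<noteq> 0 \<and> \<bar>if X = {} then int N else lam X\<bar> < int N"
        using X MN by auto
    qed
    show "\<And>X. X \<in> SV N \<Longrightarrow> X \<noteq> {} \<Longrightarrow> (if uminus ` X = {} then int N else lam (uminus ` X)) =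
       - (if X = {} then int N else lam X)" using a2 by auto
    show "\<And>X Y. X \<in> SV N \<Longrightarrow> Y \<in> SV N \<Longrightarrow> X \<noteq> {} \<Longrightarrow> X \<subseteq> Y \<Longrightarrow>
       (if X = {} then int N else lam X) \<noteq> - (if Y = {} then int N else lam Y)" using a3 by auto
  qed
  show False by (rule tuck_False)
qed



definition sg :: "int set \<Rightarrow> nat \<Rightarrow> int" where
  "sg X i = (if int i \<in> X then 1 else if - int i \<in> X then -1 else 0)"

definition alt_ok :: "int set \<Rightarrow> nat \<Rightarrow> bool" where
  "alt_ok X k \<longleftrightarrow> (\<exists>p s. (s = 1 \<or> s = -1) \<and> (\<forall>j<k. sg X (p j) = s * (-1)^j) \<and>
       (\<forall>j. Suc j < k \<longrightarrow> p j < p (Suc j)))"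

definition alt :: "int set \<Rightarrow> nat" where
  "alt X = (GREATEST k. alt_ok X k)"

definition fs :: "int set \<Rightarrow> int" where
  "fs X = sg X (LEAST i. sg X i \<noteq> 0)"

lemma sg_nz_pos: "X \<in> SV N \<Longrightarrow> sg X i \<noteq> 0 \<Longrightarrow> 1 \<le> i \<and> i \<le> N"
  unfolding sg_def SV_def by (auto split: if_splits)

lemma sg_range: "sg X i = 1 \<or> sg X i = -1 \<or> sg X i = 0"
  unfolding sg_def by auto

lemma mono_gap: assumes "\<forall>j. Suc j < k \<longrightarrow> p j < (p (Suc j)::nat)" "i \<le> j" "j < k"
  shows "p i + (j - i) \<le> p j"
  using assms(2,3)
proof (induction j)
  case 0 then show ?case by simp
next
  case (Suc j)
  show ?case
  proof (cases "i = Suc j")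
    case True then show ?thesis by simp
  next
    case False
    then have "i \<le> j" using Suc by simp
    then have "p i + (j - i) \<le> p j" using Suc by simp
    moreover have "p j < p (Suc j)" using assms(1) Suc by simp
    ultimately show ?thesis using \<open>i \<le> j\<close> by simp
  qed
qed

lemma alt_ok_bound: assumes X: "X \<in> SV N" and a: "alt_ok X k" shows "k \<le> N"
proof (cases k)
  case 0 then show ?thesis by simp
next
  case (Suc k')
  from a obtain p s where ps: "s = 1 \<or> s = -1" "\<forall>j<k. sg X (p j) = s * (-1)^j"
    "\<forall>j. Suc j < k \<longrightarrow> p j < p (Suc j)" unfolding alt_ok_def by blast
  have nz: "\<And>j. j < k \<Longrightarrow> sg X (p j) \<noteq> 0" using ps by auto
  have "p 0 + k' \<le> p k'" using mono_gap[OF ps(3), of 0 k'] Suc by simp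
  moreover have "1 \<le> p 0" using sg_nz_pos[OF X nz[of 0]] Suc by simp
  moreover have "p k' \<le> N" using sg_nz_pos[OF X nz[of k']] Suc by simp
  ultimately show ?thesis using Suc by simp
qed

lemma alt_ok_alt: "X \<in> SV N \<Longrightarrow> alt_ok X (alt X)"
  unfolding alt_def
  by (rule GreatestI_nat[of _ 0 N]) (auto simp: alt_ok_def alt_ok_bound)

lemma alt_ge: "X \<in> SV N \<Longrightarrow> alt_ok X k \<Longrightarrow> k \<le> alt X"
  unfolding alt_def by (rule Greatest_le_nat[of _ _ N]) (auto simp: alt_ok_bound)

lemma alt_ok_mono: assumes "alt_ok X k" "k' \<le> k" shows "alt_ok X k'"
proof -
  obtain p s where ps: "s = 1 \<or> s = -1" "\<forall>j<k. sg X (p j) = s * (-1)^j"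
    "\<forall>j. Suc j < k \<longrightarrow> p j < p (Suc j)" using assms(1) unfolding alt_ok_def by blast
  have "\<forall>j<k'. sg X (p j) = s * (-1)^j" using ps(2) assms(2) by auto
  moreover have "\<forall>j. Suc j < k' \<longrightarrow> p j < p (Suc j)" using ps(3) assms(2) by auto
  ultimately show ?thesis unfolding alt_ok_def using ps(1) by blast
qed

lemma alt_pos: assumes X: "X \<in> SV N" "X \<noteq> {}" shows "1 \<le> alt X"
proof -
  obtain x where x: "x \<in> X" using X by auto
  have x0: "x \<noteq> 0" using X x unfolding SV_def by auto
  have "alt_ok X 1"
  proof (cases "x > 0")
    case True
    then have "sg X (nat x) = 1" using x unfolding sg_def by auto
    then show ?thesis unfolding alt_ok_def by (intro exI[of _ "\<lambda>_. nat x"] exI[of _ 1]) auto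
  next
    case False
    then have "x < 0" using x0 by simp
    then have "- int (nat (-x)) \<in> X" using x by simp
    moreover have "int (nat (-x)) \<notin> X" using X x \<open>x < 0\<close> unfolding SV_def by auto
    ultimately have "sg X (nat (-x)) = -1" unfolding sg_def by auto
    then show ?thesis unfolding alt_ok_def by (intro exI[of _ "\<lambda>_. nat (-x)"] exI[of _ "-1"]) auto
  qed
  then show ?thesis using alt_ge[OF X(1)] by simp
qed

lemma sg_neg: "X \<in> SV N \<Longrightarrow> sg (uminus ` X) i = - sg X i"
  unfolding sg_def SV_def by (auto simp: image_iff) (metis add.inverse_inverse)+

lemma alt_ok_neg: assumes X: "X \<in> SV N" shows "alt_ok (uminus ` X) k \<longleftrightarrow> alt_ok X k"
proof
  assume "alt_ok (uminus ` X) k"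
  then obtain p s where ps: "s = 1 \<or> s = -1" "\<forall>j<k. sg (uminus ` X) (p j) = s * (-1)^j"
    "\<forall>j. Suc j < k \<longrightarrow> p j < p (Suc j)" unfolding alt_ok_def by blast
  show "alt_ok X k" unfolding alt_ok_def
    using ps sg_neg[OF X] by (intro exI[of _ p] exI[of _ "-s"]) (auto simp: minus_equation_iff)
next
  assume "alt_ok X k"
  then obtain p s where ps: "s = 1 \<or> s = -1" "\<forall>j<k. sg X (p j) = s * (-1)^j"
    "\<forall>j. Suc j < k \<longrightarrow> p j < p (Suc j)" unfolding alt_ok_def by blast
  show "alt_ok (uminus ` X) k" unfolding alt_ok_def
    using ps sg_neg[OF X] by (intro exI[of _ p] exI[of _ "-s"]) auto
qed

lemma alt_neg: assumes "X \<in> SV N" shows "alt (uminus ` X) = alt X"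
proof -
  have "alt_ok (uminus ` X) = alt_ok X" by (rule ext) (rule alt_ok_neg[OF assms])
  then show ?thesis unfolding alt_def by simp
qed

lemma fs_neg: "X \<in> SV N \<Longrightarrow> fs (uminus ` X) = - fs X"
  unfolding fs_def using sg_neg by simp

lemma prepend: assumes a: "\<forall>j<k. sg Z (p j) = s * (-1)^j" "\<forall>j. Suc j < k \<longrightarrow> p j < p (Suc j)"
  and s: "s = 1 \<or> s = -1" and k: "k \<ge> 1" and q: "q < p 0" "sg Z q = - s"
  shows "alt_ok Z (Suc k)"
proof -
  define p' where "p' = (\<lambda>j. if j = 0 then q else p (j - 1))"
  have "\<forall>j<Suc k. sg Z (p' j) = (-s) * (-1)^j"
  proof (intro allI impI)
    fix j assume "j < Suc k"
    show "sg Z (p' j) = (-s) * (-1)^j"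
    proof (cases j)
      case 0 then show ?thesis using q unfolding p'_def by simp
    next
      case (Suc j') then show ?thesis using a \<open>j < Suc k\<close> unfolding p'_def by simp
    qed
  qed
  moreover have "\<forall>j. Suc j < Suc k \<longrightarrow> p' j < p' (Suc j)"
  proof (intro allI impI)
    fix j assume "Suc j < Suc k"
    show "p' j < p' (Suc j)"
    proof (cases j)
      case 0 then show ?thesis using q unfolding p'_def by simp
    next
      case (Suc j') then show ?thesis using a \<open>Suc j < Suc k\<close> unfolding p'_def by simp
    qed
  qed
  ultimately show ?thesis unfolding alt_ok_def using s by (intro exI[of _ p'] exI[of _ "-s"]) auto
qed

lemma fs_mono: assumes X: "X \<in> SV N" "X \<noteq> {}" and Y: "Y \<in> SV N" and XY: "X \<subseteq> Y"
  and eq: "alt X = alt Y" shows "fs X = fs Y"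
proof (rule ccontr)
  assume ne: "fs X \<noteq> fs Y"
  define k where "k = alt X"
  have k1: "k \<ge> 1" unfolding k_def using alt_pos[OF X] .
  obtain p s where ps: "s = 1 \<or> s = -1" "\<forall>j<k. sg X (p j) = s * (-1)^j"
    "\<forall>j. Suc j < k \<longrightarrow> p j < p (Suc j)" using alt_ok_alt[OF X(1)] unfolding alt_ok_def k_def by blast
  have sgXY: "\<And>i. sg X i \<noteq> 0 \<Longrightarrow> sg Y i = sg X i"
  proof -
    fix i assume "sg X i \<noteq> 0"
    then have "int i \<in> X \<or> - int i \<in> X" unfolding sg_def by (auto split: if_splits)
    then show "sg Y i = sg X i"
    proof
      assume "int i \<in> X" then show ?thesis using XY unfolding sg_def by auto
    next
      assume a: "- int i \<in> X"
      then have "int i \<notin> Y" using XY Y unfolding SV_def by (metis (no_types, lifting) mem_Collect_eq minus_minus subsetD)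
      moreover have "int i \<notin> X" using a X unfolding SV_def by (metis (no_types, lifting) mem_Collect_eq minus_minus)
      ultimately show ?thesis using a XY unfolding sg_def by auto
    qed
  qed
  have p0: "sg X (p 0) = s" using ps k1 by auto
  define mX where "mX = (LEAST i. sg X i \<noteq> 0)"
  define mY where "mY = (LEAST i. sg Y i \<noteq> 0)"
  have s0: "s \<noteq> 0" using ps by auto
  have mXle: "mX \<le> p 0" unfolding mX_def by (rule Least_le) (simp add: p0 s0)
  have mXnz: "sg X mX \<noteq> 0" unfolding mX_def by (rule LeastI[of _ "p 0"]) (simp add: p0 s0)
  have mYle: "mY \<le> mX" unfolding mY_def by (rule Least_le) (simp add: sgXY[OF mXnz] mXnz)
  have mYnz: "sg Y mY \<noteq> 0" unfolding mY_def by (rule LeastI[of _ mX]) (simp add: sgXY[OF mXnz] mXnz)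
  have fsX: "fs X = sg X mX" unfolding fs_def mX_def ..
  have fsY: "fs Y = sg Y mY" unfolding fs_def mY_def ..
  have opp: "fs Y = - fs X" using ne fsX fsY mXnz mYnz sg_range[of X mX] sg_range[of Y mY] by auto
  show False
  proof (cases "s = fs X")
    case True
    have "sg Y (p 0) = s" using sgXY p0 s0 by simp
    then have "mY \<noteq> p 0" using fsY opp True s0 by auto
    then have lt: "mY < p 0" using mYle mXle by simp
    have "\<forall>j<k. sg Y (p j) = s * (-1)^j"
    proof (intro allI impI)
      fix j assume "j < k"
      then have e: "sg X (p j) = s * (-1)^j" using ps(2) by simp
      then have "sg X (p j) \<noteq> 0" using s0 by simp
      then show "sg Y (p j) = s * (-1)^j" using sgXY e by simp
    qed
    then have "alt_ok Y (Suc k)" using prepend[OF _ ps(3) ps(1) k1 lt] fsY opp True by simp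
    then have "Suc k \<le> alt Y" using alt_ge[OF Y] by simp
    then show False using eq unfolding k_def by simp
  next
    case False
    then have "fs X = - s" using ps fsX mXnz sg_range[of X mX] by auto
    then have "mX \<noteq> p 0" using fsX p0 s0 by auto
    then have lt: "mX < p 0" using mXle by simp
    have "alt_ok X (Suc k)" using prepend[OF ps(2) ps(3) ps(1) k1 lt] fsX \<open>fs X = - s\<close> by simp
    then have "Suc k \<le> alt X" using alt_ge[OF X(1)] by simp
    then show False unfolding k_def by simp
  qed
qed



definition posp :: "int set \<Rightarrow> nat set" where "posp X = {i. int i \<in> X}"
definition negp :: "int set \<Rightarrow> nat set" where "negp X = {i. - int i \<in> X}"

lemma extract_basis:
  assumes r: "1 \<le> r" "r \<le> m" and X: "X \<in> SV (m + r)" and a: "alt_ok X (2*r - 1)"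
  shows "\<exists>B\<in>catalan_minus_bases r m. B \<subseteq> posp X \<or> B \<subseteq> negp X"
proof -
  define k where "k = 2*r - 1"
  obtain p s where ps: "s = 1 \<or> s = -1" "\<forall>j<k. sg X (p j) = s * (-1)^j"
    "\<forall>j. Suc j < k \<longrightarrow> p j < p (Suc j)" using a unfolding alt_ok_def k_def by blast
  define q where "q = (\<lambda>i. p (2*i))"
  define B where "B = set (map q [0..<r])"
  have nz: "\<And>j. j < k \<Longrightarrow> sg X (p j) \<noteq> 0" using ps by auto
  have qlt: "\<And>i i'. i < i' \<Longrightarrow> i' < r \<Longrightarrow> q i < q i'"
  proof -
    fix i i' assume "i < i'" "i' < r"
    then have "p (2*i) + (2*i' - 2*i) \<le> p (2*i')" using mono_gap[OF ps(3), of "2*i" "2*i'"]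
      unfolding k_def by simp
    then show "q i < q i'" unfolding q_def using \<open>i < i'\<close> by simp
  qed
  have ss: "sorted_wrt (<) (map q [0..<r])"
    unfolding sorted_wrt_map
    by (rule sorted_wrt_mono_rel[OF _ sorted_wrt_upt]) (auto intro: qlt)
  then have sd: "sorted (map q [0..<r])" "distinct (map q [0..<r])" using strict_sorted_iff by auto
  have sl: "sorted_list_of_set B = map q [0..<r]"
    unfolding B_def using sd by (rule sorted_list_of_set.idem_if_sorted_distinct)
  have cB: "card B = r" unfolding B_def using sd distinct_card by fastforce
  have bounds: "\<And>i. i < r \<Longrightarrow> 2*(i+1) - 1 \<le> q i \<and> q i \<le> m + 2*(i+1) - r"
  proof -
    fix i assume i: "i < r"
    have lo: "p 0 + 2*i \<le> p (2*i)" using mono_gap[OF ps(3), of 0 "2*i"] i unfolding k_def by simp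
    have p0: "1 \<le> p 0" using sg_nz_pos[OF X nz[of 0]] r unfolding k_def by simp
    have hi: "p (2*i) + (2*r - 2 - 2*i) \<le> p (2*r - 2)"
      using mono_gap[OF ps(3), of "2*i" "2*r-2"] i r unfolding k_def by simp
    have pk: "p (2*r - 2) \<le> m + r" using sg_nz_pos[OF X nz[of "2*r-2"]] r unfolding k_def by simp
    show "2*(i+1) - 1 \<le> q i \<and> q i \<le> m + 2*(i+1) - r" unfolding q_def using lo p0 hi pk i r by simp
  qed
  have rng: "B \<subseteq> {1..m+r}"
  proof
    fix x assume "x \<in> B"
    then obtain i where i: "i < r" "x = p (2*i)" unfolding B_def q_def by auto
    then show "x \<in> {1..m+r}" using sg_nz_pos[OF X nz[of "2*i"]] unfolding k_def by simp
  qed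
  have inB: "B \<in> catalan_minus_bases r m"
    unfolding catalan_minus_bases_def using rng cB bounds sl by auto
  have sgq: "\<And>i. i < r \<Longrightarrow> sg X (q i) = s"
  proof -
    fix i assume "i < r"
    then have "2*i < k" unfolding k_def by simp
    then show "sg X (q i) = s" using ps(2) unfolding q_def by simp
  qed
  have "B \<subseteq> posp X \<or> B \<subseteq> negp X"
  proof (cases "s = 1")
    case True
    have "B \<subseteq> posp X"
    proof
      fix x assume "x \<in> B"
      then obtain i where i: "i < r" "x = q i" unfolding B_def by auto
      then have "sg X x = 1" using sgq True by simp
      then show "x \<in> posp X" unfolding posp_def sg_def by (auto split: if_splits)
    qed
    then show ?thesis by simp
  next
    case False
    then have s: "s = -1" using ps by simp
    have "B \<subseteq> negp X"
    proof
      fix x assume "x \<in> B"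
      then obtain i where i: "i < r" "x = q i" unfolding B_def by auto
      then have "sg X x = -1" using sgq s by simp
      then show "x \<in> negp X" unfolding negp_def sg_def by (auto split: if_splits)
    qed
    then show ?thesis by simp
  qed
  then show ?thesis using inB by blast
qed



lemma posp_negp_disj: "X \<in> SV N \<Longrightarrow> posp X \<inter> negp X = {}"
  unfolding posp_def negp_def SV_def by auto

lemma posp_neg: "posp (uminus ` X) = negp X"
  unfolding posp_def negp_def by (auto simp: image_iff) (metis minus_minus)

lemma negp_neg: "negp (uminus ` X) = posp X"
  unfolding posp_def negp_def by (auto simp: image_iff)

lemma posp_mono: "X \<subseteq> Y \<Longrightarrow> posp X \<subseteq> posp Y" unfolding posp_def by auto
lemma negp_mono: "X \<subseteq> Y \<Longrightarrow> negp X \<subseteq> negp Y" unfolding negp_def by auto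

lemma CB_finite: "finite (catalan_minus_bases r m)"
proof -
  have "catalan_minus_bases r m \<subseteq> Pow {1..m+r}" unfolding catalan_minus_bases_def by auto
  then show ?thesis by (rule finite_subset) auto
qed

lemma CB_ne: "B \<in> catalan_minus_bases r m \<Longrightarrow> 1 \<le> r \<Longrightarrow> B \<noteq> {}"
  unfolding catalan_minus_bases_def by auto

lemma fs_unit: assumes "X \<noteq> {}" "X \<in> SV N" shows "fs X = 1 \<or> fs X = -1"
proof -
  obtain x where x: "x \<in> X" using assms by auto
  have "sg X (nat \<bar>x\<bar>) \<noteq> 0" using x assms(2) unfolding sg_def SV_def
    by (cases "x \<ge> 0") auto
  then have "sg X (LEAST i. sg X i \<noteq> 0) \<noteq> 0" by (rule LeastI)
  then show ?thesis unfolding fs_def using sg_range by blast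
qed

lemma lower_bound:
  fixes r m K :: nat and f :: "nat set \<Rightarrow> nat"
  assumes r: "1 \<le> r" "r \<le> m"
  and col: "\<forall>v\<in>catalan_minus_bases r m. f v < K"
  and prp: "\<forall>u\<in>catalan_minus_bases r m. \<forall>v\<in>catalan_minus_bases r m. kneser_adj u v \<longrightarrow> f u \<noteq> f v"
  shows "m - r + 2 \<le> K"
proof -
  define CB where "CB = catalan_minus_bases r m"
  define N where "N = m + r"
  define CBX where "CBX X = {B \<in> CB. B \<subseteq> posp X \<or> B \<subseteq> negp X}" for X
  define c where "c X = Max (f ` CBX X)" for X
  define sgc where "sgc X = (if \<exists>B\<in>CB. B \<subseteq> posp X \<and> f B = c X then 1 else (-1::int))" for X
  define lam where "lam X = (if alt X \<le> 2*r - 2 then fs X * int (alt X)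
                             else sgc X * int (2*r - 1 + c X))" for X
  have conflict: "\<And>Y B1 B2. Y \<in> SV N \<Longrightarrow> B1 \<in> CB \<Longrightarrow> B2 \<in> CB \<Longrightarrow> B1 \<subseteq> posp Y \<Longrightarrow> B2 \<subseteq> negp Y
      \<Longrightarrow> f B1 \<noteq> f B2"
  proof -
    fix Y B1 B2 assume a: "Y \<in> SV N" "B1 \<in> CB" "B2 \<in> CB" "B1 \<subseteq> posp Y" "B2 \<subseteq> negp Y"
    have "B1 \<inter> B2 = {}" using posp_negp_disj[OF a(1)] a by auto
    moreover have "B1 \<noteq> {}" using CB_ne a(2) r unfolding CB_def by auto
    ultimately have "kneser_adj B1 B2" unfolding kneser_adj_def by auto
    then show "f B1 \<noteq> f B2" using prp a unfolding CB_def by auto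
  qed
  have large: "\<And>X. X \<in> SV N \<Longrightarrow> \<not> alt X \<le> 2*r - 2 \<Longrightarrow>
      (\<exists>B\<in>CBX X. f B = c X) \<and> c X < K \<and> finite (CBX X)"
  proof -
    fix X assume X: "X \<in> SV N" "\<not> alt X \<le> 2*r - 2"
    have "alt_ok X (2*r - 1)" using alt_ok_mono[OF alt_ok_alt[OF X(1)]] X(2) by simp
    then obtain B where "B \<in> CB" "B \<subseteq> posp X \<or> B \<subseteq> negp X"
      using extract_basis[OF r, of X] X(1) unfolding N_def CB_def by blast
    then have ne: "CBX X \<noteq> {}" unfolding CBX_def by auto
    have fin: "finite (CBX X)" unfolding CBX_def CB_def using CB_finite by auto
    have "c X \<in> f ` CBX X" unfolding c_def using ne fin by (intro Max_in) auto
    then obtain B' where B': "B' \<in> CBX X" "f B' = c X" by auto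
    then have "c X < K" using col unfolding CBX_def CB_def by auto
    then show "(\<exists>B\<in>CBX X. f B = c X) \<and> c X < K \<and> finite (CBX X)" using B' fin by auto
  qed
  have CBX_neg: "\<And>X. CBX (uminus ` X) = CBX X" unfolding CBX_def posp_neg negp_neg by auto
  have "N \<le> 2*r - 2 + K"
  proof (rule tucker[of N lam])
    fix X assume X: "X \<in> SV N" "X \<noteq> {}"
    have a1: "1 \<le> alt X" using alt_pos[OF X] .
    show "lam X \<noteq> 0 \<and> \<bar>lam X\<bar> \<le> int (2*r - 2 + K)"
    proof (cases "alt X \<le> 2*r - 2")
      case True
      then show ?thesis unfolding lam_def using fs_unit[OF X(2) X(1)] a1 by (auto simp: abs_mult)
    next
      case False
      have "c X < K" using large[OF X(1) False] by simp
      moreover have "sgc X = 1 \<or> sgc X = -1" unfolding sgc_def by auto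
      ultimately show ?thesis unfolding lam_def using False r by (auto simp: abs_mult)
    qed
  next
    fix X assume X: "X \<in> SV N" "X \<noteq> {}"
    have an: "alt (uminus ` X) = alt X" using alt_neg[OF X(1)] .
    show "lam (uminus ` X) = - lam X"
    proof (cases "alt X \<le> 2*r - 2")
      case True
      then show ?thesis unfolding lam_def an using fs_neg[OF X(1)] by simp
    next
      case False
      have cn: "c (uminus ` X) = c X" unfolding c_def CBX_neg ..
      obtain B0 where B0: "B0 \<in> CBX X" "f B0 = c X" using large[OF X(1) False] by auto
      have "sgc (uminus ` X) = - sgc X"
      proof (cases "B0 \<subseteq> posp X")
        case True
        have "sgc X = 1" unfolding sgc_def using True B0 unfolding CBX_def by auto
        moreover have "\<not> (\<exists>B\<in>CB. B \<subseteq> negp X \<and> f B = c X)"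
        proof
          assume "\<exists>B\<in>CB. B \<subseteq> negp X \<and> f B = c X"
          then obtain B where B: "B \<in> CB" "B \<subseteq> negp X" "f B = c X" by blast
          have "B0 \<in> CB" using B0 unfolding CBX_def by auto
          have "f B0 \<noteq> f B" using conflict[OF X(1) \<open>B0 \<in> CB\<close> B(1) True B(2)] .
          then show False using B B0 by simp
        qed
        ultimately show ?thesis unfolding sgc_def cn posp_neg by auto
      next
        case False
        then have Bn: "B0 \<subseteq> negp X" using B0 unfolding CBX_def by auto
        have "sgc (uminus ` X) = 1" unfolding sgc_def cn posp_neg using Bn B0 unfolding CBX_def by auto
        moreover have "\<not> (\<exists>B\<in>CB. B \<subseteq> posp X \<and> f B = c X)"
        proof
          assume "\<exists>B\<in>CB. B \<subseteq> posp X \<and> f B = c X"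
          then obtain B where B: "B \<in> CB" "B \<subseteq> posp X" "f B = c X" by blast
          have "B0 \<in> CB" using B0 unfolding CBX_def by auto
          have "f B \<noteq> f B0" using conflict[OF X(1) B(1) \<open>B0 \<in> CB\<close> B(2) Bn] .
          then show False using B B0 by simp
        qed
        ultimately show ?thesis unfolding sgc_def by auto
      qed
      then show ?thesis unfolding lam_def an cn using False by simp
    qed
  next
    fix X Y assume X: "X \<in> SV N" and Y: "Y \<in> SV N" and Xne: "X \<noteq> {}" and XY: "X \<subseteq> Y"
    have Yne: "Y \<noteq> {}" using Xne XY by auto
    have aX: "1 \<le> alt X" using alt_pos[OF X Xne] .
    have aY: "1 \<le> alt Y" using alt_pos[OF Y Yne] .
    have fX: "fs X = 1 \<or> fs X = -1" using fs_unit[OF Xne X] .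
    have fY: "fs Y = 1 \<or> fs Y = -1" using fs_unit[OF Yne Y] .
    have sX: "sgc X = 1 \<or> sgc X = -1" unfolding sgc_def by auto
    have sY: "sgc Y = 1 \<or> sgc Y = -1" unfolding sgc_def by auto
    show "lam X \<noteq> - lam Y"
    proof
      assume eq: "lam X = - lam Y"
      then have abseq: "\<bar>lam X\<bar> = \<bar>lam Y\<bar>" by simp
      consider (ss) "alt X \<le> 2*r - 2" "alt Y \<le> 2*r - 2" | (sl) "alt X \<le> 2*r - 2" "\<not> alt Y \<le> 2*r - 2"
        | (ls) "\<not> alt X \<le> 2*r - 2" "alt Y \<le> 2*r - 2" | (ll) "\<not> alt X \<le> 2*r - 2" "\<not> alt Y \<le> 2*r - 2"
        by blast
      then show False
      proof cases
        case ss
        have "\<bar>lam X\<bar> = int (alt X)" "\<bar>lam Y\<bar> = int (alt Y)" unfolding lam_def using ss fX fY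
          by (auto simp: abs_mult)
        then have "alt X = alt Y" using abseq by simp
        then have "fs X = fs Y" using fs_mono[OF X Xne Y XY] by simp
        then have "lam X = lam Y" unfolding lam_def using ss \<open>alt X = alt Y\<close> by simp
        then show False using eq aX fX unfolding lam_def using ss by auto
      next
        case sl
        have "\<bar>lam X\<bar> = int (alt X)" unfolding lam_def using sl fX by (auto simp: abs_mult)
        moreover have "\<bar>lam Y\<bar> = int (2*r - 1 + c Y)" unfolding lam_def using sl sY by (auto simp: abs_mult)
        ultimately show False using abseq sl r by simp
      next
        case ls
        have "\<bar>lam Y\<bar> = int (alt Y)" unfolding lam_def using ls fY by (auto simp: abs_mult)
        moreover have "\<bar>lam X\<bar> = int (2*r - 1 + c X)" unfolding lam_def using ls sX by (auto simp: abs_mult)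
        ultimately show False using abseq ls r by simp
      next
        case ll
        have "\<bar>lam Y\<bar> = int (2*r - 1 + c Y)" unfolding lam_def using ll sY by (auto simp: abs_mult)
        moreover have "\<bar>lam X\<bar> = int (2*r - 1 + c X)" unfolding lam_def using ll sX by (auto simp: abs_mult)
        ultimately have ceq: "c X = c Y" using abseq by simp
        have "sgc X * int (2*r - 1 + c X) = - (sgc Y * int (2*r - 1 + c X))"
          using eq ceq ll unfolding lam_def by simp
        then have "(sgc X + sgc Y) * int (2*r - 1 + c X) = 0" by (simp add: algebra_simps)
        moreover have "int (2*r - 1 + c X) \<noteq> 0" using r by simp
        ultimately have "sgc X + sgc Y = 0" by simp
        then have "sgc X = - sgc Y" by simp
        then have opp: "(sgc X = 1 \<and> sgc Y = -1) \<or> (sgc X = -1 \<and> sgc Y = 1)" using sX sY by auto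
        then show False
        proof
          assume a: "sgc X = 1 \<and> sgc Y = -1"
          then obtain B where B: "B \<in> CB" "B \<subseteq> posp X" "f B = c X" unfolding sgc_def by (auto split: if_splits)
          then have "B \<subseteq> posp Y" using posp_mono[OF XY] by auto
          then have "sgc Y = 1" unfolding sgc_def using B ceq by auto
          then show False using a by simp
        next
          assume a: "sgc X = -1 \<and> sgc Y = 1"
          then obtain B' where B': "B' \<in> CB" "B' \<subseteq> posp Y" "f B' = c Y" unfolding sgc_def by (auto split: if_splits)
          obtain B where B: "B \<in> CBX X" "f B = c X" using large[OF X ll(1)] by auto
          have "\<not> B \<subseteq> posp X" using a B unfolding sgc_def CBX_def by (auto split: if_splits)
          then have "B \<subseteq> negp X" using B unfolding CBX_def by auto
          then have "B \<subseteq> negp Y" using negp_mono[OF XY] by auto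
          then have "f B' \<noteq> f B" using conflict[OF Y B'(1), of B] B B' unfolding CBX_def by auto
          then show False using B B' ceq by simp
        qed
      qed
    qed
  qed
  then show ?thesis unfolding N_def using r by simp
qed



lemma CBm_sub: "catalan_minus_bases r m \<subseteq> catalan_bases r m"
  unfolding catalan_minus_bases_def catalan_bases_def by auto

lemma upper_coloring:
  assumes r: "1 \<le> r" "r \<le> m"
  shows "\<exists>g :: nat set \<Rightarrow> nat. (\<forall>v\<in>catalan_bases r m. g v < m - r + 2) \<and>
     (\<forall>u\<in>catalan_bases r m. \<forall>v\<in>catalan_bases r m. kneser_adj u v \<longrightarrow> g u \<noteq> g v)"
proof -
  define g where "g B = (if Min B \<le> m - r + 1 then Min B - 1 else m - r + 1)" for B :: "nat set"
  have basic: "\<And>B. B \<in> catalan_bases r m \<Longrightarrow> finite B \<and> B \<noteq> {} \<and> B \<subseteq> {1..m+r} \<and> card B = r"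
  proof -
    fix B assume "B \<in> catalan_bases r m"
    then have B: "B \<subseteq> {1..m+r}" "card B = r" unfolding catalan_bases_def by auto
    then have "finite B" by (meson finite_atLeastAtMost finite_subset)
    then show "finite B \<and> B \<noteq> {} \<and> B \<subseteq> {1..m+r} \<and> card B = r" using B r by auto
  qed
  have minin: "\<And>B. B \<in> catalan_bases r m \<Longrightarrow> Min B \<in> B \<and> 1 \<le> Min B"
    using basic by (metis Min_in atLeastAtMost_iff subsetD)
  have "\<forall>v\<in>catalan_bases r m. g v < m - r + 2"
    unfolding g_def using minin by auto
  moreover have "\<forall>u\<in>catalan_bases r m. \<forall>v\<in>catalan_bases r m. kneser_adj u v \<longrightarrow> g u \<noteq> g v"
  proof (intro ballI impI)
    fix A B assume A: "A \<in> catalan_bases r m" and B: "B \<in> catalan_bases r m" and adj: "kneser_adj A B"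
    have disj: "A \<inter> B = {}" using adj unfolding kneser_adj_def by auto
    show "g A \<noteq> g B"
    proof
      assume eq: "g A = g B"
      consider (a) "Min A \<le> m - r + 1" "Min B \<le> m - r + 1" | (b) "Min A \<le> m - r + 1" "\<not> Min B \<le> m - r + 1"
        | (c) "\<not> Min A \<le> m - r + 1" "Min B \<le> m - r + 1" | (d) "\<not> Min A \<le> m - r + 1" "\<not> Min B \<le> m - r + 1"
        by blast
      then show False
      proof cases
        case a
        then have "Min A - 1 = Min B - 1" using eq unfolding g_def by simp
        moreover have "1 \<le> Min A" "1 \<le> Min B" using minin[OF A] minin[OF B] by auto
        ultimately have "Min A = Min B" by linarith
        then show False using minin[OF A] minin[OF B] disj by auto
      next
        case b then show False using eq minin[OF A] unfolding g_def by simp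
      next
        case c then show False using eq minin[OF B] unfolding g_def by simp
      next
        case d
        have "A \<subseteq> {m - r + 2..m + r}"
        proof
          fix x assume "x \<in> A"
          then have "Min A \<le> x" "x \<le> m + r" using basic[OF A] by auto
          then show "x \<in> {m - r + 2..m + r}" using d by simp
        qed
        moreover have "B \<subseteq> {m - r + 2..m + r}"
        proof
          fix x assume "x \<in> B"
          then have "Min B \<le> x" "x \<le> m + r" using basic[OF B] by auto
          then show "x \<in> {m - r + 2..m + r}" using d by simp
        qed
        ultimately have "A \<union> B \<subseteq> {m - r + 2..m + r}" by auto
        then have "card (A \<union> B) \<le> card {m - r + 2..m + r}" by (intro card_mono) auto
        moreover have "card (A \<union> B) = 2 * r" using basic[OF A] basic[OF B] disj
          by (simp add: card_Un_disjoint)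
        moreover have "card {m - r + 2..m + r} = 2 * r - 1" using r by simp
        ultimately show False using r by simp
      qed
    qed
  qed
  ultimately show ?thesis by blast
qed

theorem proposition4p8:
  fixes r m :: nat
  assumes "1 \<le> r" and "r \<le> m"
  shows "chi_KG (catalan_bases r m) = m - r + 2 \<and>
         chi_KG (catalan_minus_bases r m) = m - r + 2"
proof -
  obtain g :: "nat set \<Rightarrow> nat" where g1: "\<forall>v\<in>catalan_bases r m. g v < m - r + 2"
    and g2: "\<forall>u\<in>catalan_bases r m. \<forall>v\<in>catalan_bases r m. kneser_adj u v \<longrightarrow> g u \<noteq> g v"
    using upper_coloring[OF assms] by blast
  have c1: "chromatic_number (catalan_bases r m) kneser_adj = m - r + 2"
    unfolding chromatic_number_def
  proof (rule Least_equality)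
    show "\<exists>f :: nat set \<Rightarrow> nat. (\<forall>v\<in>catalan_bases r m. f v < m - r + 2) \<and>
      (\<forall>u\<in>catalan_bases r m. \<forall>v\<in>catalan_bases r m. kneser_adj u v \<longrightarrow> f u \<noteq> f v)"
      using g1 g2 by blast
  next
    fix k assume "\<exists>f :: nat set \<Rightarrow> nat. (\<forall>v\<in>catalan_bases r m. f v < k) \<and>
      (\<forall>u\<in>catalan_bases r m. \<forall>v\<in>catalan_bases r m. kneser_adj u v \<longrightarrow> f u \<noteq> f v)"
    then obtain f :: "nat set \<Rightarrow> nat" where f: "\<forall>v\<in>catalan_bases r m. f v < k"
      "\<forall>u\<in>catalan_bases r m. \<forall>v\<in>catalan_bases r m. kneser_adj u v \<longrightarrow> f u \<noteq> f v" by blast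
    show "m - r + 2 \<le> k"
      by (rule lower_bound[OF assms, of f]) (use f CBm_sub in blast)+
  qed
  have c2: "chromatic_number (catalan_minus_bases r m) kneser_adj = m - r + 2"
    unfolding chromatic_number_def
  proof (rule Least_equality)
    show "\<exists>f :: nat set \<Rightarrow> nat. (\<forall>v\<in>catalan_minus_bases r m. f v < m - r + 2) \<and>
      (\<forall>u\<in>catalan_minus_bases r m. \<forall>v\<in>catalan_minus_bases r m. kneser_adj u v \<longrightarrow> f u \<noteq> f v)"
      using g1 g2 CBm_sub by blast
  next
    fix k assume "\<exists>f :: nat set \<Rightarrow> nat. (\<forall>v\<in>catalan_minus_bases r m. f v < k) \<and>
      (\<forall>u\<in>catalan_minus_bases r m. \<forall>v\<in>catalan_minus_bases r m. kneser_adj u v \<longrightarrow> f u \<noteq> f v)"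
    then obtain f :: "nat set \<Rightarrow> nat" where f: "\<forall>v\<in>catalan_minus_bases r m. f v < k"
      "\<forall>u\<in>catalan_minus_bases r m. \<forall>v\<in>catalan_minus_bases r m. kneser_adj u v \<longrightarrow> f u \<noteq> f v" by blast
    show "m - r + 2 \<le> k" by (rule lower_bound[OF assms, of f]) (use f in blast)+
  qed
  show ?thesis unfolding chi_KG_def using c1 c2 by simp
qed


end
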